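(* Let $D$ be a Newton diagram in $2$ variables whose support $K$ has size $d$, is connected, and contains $(0,0)$. Then $\#(D)\ge\frac{d+5}{2}$.
   Context: For $m\in\mathbb Z^n$ write $|m|=m_1+\dots+m_n$; $e_1,\dots,e_n$ is the standard basis. A Newton diagram in $n$ variables is a function $D\colon\mathbb Z^n\to\{0,P,N\}$ ($P,N$ formal symbols) whose support $K=D^{-1}(\{P,N\})$ is a finite nonempty subset of $\mathbb N_0^n$. For $a\in\mathbb Z^n$ let $E(a)=\{a,a-e_1,\dots,a-e_n\}$; $E(a)$ is a node of $D$ if the image $D(E(a))$ equals $\{P\}$, $\{N\}$, $\{0,P\}$ or $\{0,N\}$. $\#(D)$ is the number of $a\in\mathbb Z^n$ for which $E(a)$ is a node. Two distinct points $m,m'$ are adjacent if $m-m'\in\{\pm e_j\}\cup\{e_j-e_k: j\ne k\}$; $K$ is connected if any two points of $K$ are joined by a path of successively adjacent points of $K$. The size of $K$ is $k-|a|+1$ where $k=\max_{m\in K}|m|$ and $a_j=\min_{m\in K}m_j$. *)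

theory Defs
  imports Complex_Main "HOL-Library.Product_Plus"
begin

datatype sym = Zero | P | N

definition e1 :: "int \<times> int" where "e1 = (1, 0)"
definition e2 :: "int \<times> int" where "e2 = (0, 1)"

definition support :: "(int \<times> int \<Rightarrow> sym) \<Rightarrow> (int \<times> int) set" where
  "support D = {m. D m \<in> {P, N}}"

definition newton_diagram2 :: "(int \<times> int \<Rightarrow> sym) \<Rightarrow> bool" where
  "newton_diagram2 D \<longleftrightarrow> finite (support D) \<and> support D \<noteq> {}
     \<and> support D \<subseteq> {m. fst m \<ge> 0 \<and> snd m \<ge> 0}"

definition E :: "int \<times> int \<Rightarrow> (int \<times> int) set" where
  "E a = {a, a - e1, a - e2}"

definition is_node :: "(int \<times> int \<Rightarrow> sym) \<Rightarrow> int \<times> int \<Rightarrow> bool" where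
  "is_node D a \<longleftrightarrow> D ` E a \<in> {{P}, {N}, {Zero, P}, {Zero, N}}"

definition num_nodes :: "(int \<times> int \<Rightarrow> sym) \<Rightarrow> nat" where
  "num_nodes D = card {a. is_node D a}"

definition adjacent :: "int \<times> int \<Rightarrow> int \<times> int \<Rightarrow> bool" where
  "adjacent m m' \<longleftrightarrow> m \<noteq> m' \<and>
     m - m' \<in> {e1, -e1, e2, -e2, e1 - e2, e2 - e1}"

definition connected_pts :: "(int \<times> int) set \<Rightarrow> bool" where
  "connected_pts K \<longleftrightarrow> (\<forall>x\<in>K. \<forall>y\<in>K.
     (\<lambda>u v. u \<in> K \<and> v \<in> K \<and> adjacent u v)\<^sup>*\<^sup>* x y)"

definition size_pts :: "(int \<times> int) set \<Rightarrow> int" where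
  "size_pts K = Max ((\<lambda>m. fst m + snd m) ` K)
     - (Min (fst ` K) + Min (snd ` K)) + 1"

end

theory Submission
  imports Defs
begin

definition good :: "sym \<Rightarrow> sym \<Rightarrow> sym \<Rightarrow> bool" where
  "good p q r \<longleftrightarrow> {p,q,r} \<in> {{P},{N},{Zero,P},{Zero,N}}"

lemma good_alt: "good p q r \<longleftrightarrow> (p \<noteq> Zero \<or> q \<noteq> Zero \<or> r \<noteq> Zero) \<and> \<not> (P \<in> {p,q,r} \<and> N \<in> {p,q,r})"
  unfolding good_def by (cases p; cases q; cases r) auto

definition ff :: "sym \<Rightarrow> sym \<Rightarrow> int" where
  "ff a b = (if a \<noteq> Zero \<and> (b = Zero \<or> b = a) then 1 else 0)"

definition pp :: "sym \<Rightarrow> sym \<Rightarrow> int" where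
  "pp a c = (if a \<noteq> Zero \<and> c \<noteq> a then 1 else 0)"

lemma local_main:
  "2 * of_bool (good c a b) + ff c d - ff a b \<ge> pp b d - pp a c
     + (if \<not> (a = Zero \<and> c = Zero) \<and> (b = Zero \<and> d = Zero) then 1 else 0)"
  by (cases a; cases b; cases c; cases d) (simp_all add: good_alt ff_def pp_def)

lemma local_u0:
  "2 * of_bool (good Zero a b) + ff Zero Zero - ff a b \<ge> 2 * of_bool (b \<noteq> Zero) - 2 * of_bool (a \<noteq> Zero)
     + (if \<not> (a = Zero) \<and> b = Zero then 3 else 0)"
  by (cases a; cases b) (simp_all add: good_alt ff_def)

lemma local_w0:
  "2 * of_bool (good c Zero Zero) + ff c d - ff Zero Zero \<ge> 0 - 0
     + (if \<not> (c = Zero) \<and> d = Zero then 3 else 0)"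
  by (cases c; cases d) (simp_all add: good_alt ff_def)

lemma telescope_credit:
  fixes g p :: "nat \<Rightarrow> int" and z :: "nat \<Rightarrow> bool" and c :: int
  assumes step: "\<And>i. i < n \<Longrightarrow> g i \<ge> p (Suc i) - p i + (if \<not> z i \<and> z (Suc i) then c else 0)"
    and p0: "p 0 = 0" and pn: "p n = 0" and zn: "z n" and jn: "j < n" and zj: "\<not> z j" and c0: "c \<ge> 0"
  shows "(\<Sum>i<n. g i) \<ge> c"
proof -
  define cr where "cr i = (if \<not> z i \<and> z (Suc i) then c else 0)" for i
  have "(\<Sum>i<n. cr i) = (\<Sum>i<n. (p (Suc i) - p i) + cr i)"
    by (simp add: sum.distrib sum_lessThan_telescope p0 pn)
  also have "\<dots> \<le> (\<Sum>i<n. g i)"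
    by (rule sum_mono) (use step in \<open>auto simp: cr_def\<close>)
  finally have A: "(\<Sum>i<n. g i) \<ge> (\<Sum>i<n. cr i)" .
  define S where "S = {i. j \<le> i \<and> i < n \<and> \<not> z i}"
  have fS: "finite S" unfolding S_def by auto
  have jS: "j \<in> S" unfolding S_def using jn zj by auto
  define i0 where "i0 = Max S"
  have i0S: "i0 \<in> S" unfolding i0_def using fS jS Max_in by auto
  have i0max: "\<And>i. i \<in> S \<Longrightarrow> i \<le> i0" unfolding i0_def using fS by auto
  have zi0: "z (Suc i0)"
  proof (cases "Suc i0 = n")
    case True then show ?thesis using zn by simp
  next
    case False
    then have "Suc i0 < n" using i0S unfolding S_def by auto
    moreover have "Suc i0 \<notin> S" using i0max by fastforce
    ultimately show ?thesis using i0S unfolding S_def by auto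
  qed
  have "cr i0 = c" using i0S zi0 unfolding S_def cr_def by auto
  moreover have "cr i0 \<le> (\<Sum>i<n. cr i)"
    by (rule member_le_sum) (use i0S c0 in \<open>auto simp: S_def cr_def\<close>)
  ultimately show ?thesis using A by linarith
qed

lemma strip_main:
  fixes w u :: "nat \<Rightarrow> sym"
  assumes w0: "w 0 = Zero" and u0: "u 0 = Zero"
    and big: "\<And>i. i \<ge> M \<Longrightarrow> w i = Zero \<and> u i = Zero"
    and nz: "w j \<noteq> Zero \<or> u j \<noteq> Zero"
  shows "(\<Sum>i<Suc M. 2 * of_bool (good (u i) (w (i-1)) (w i)) + ff (u i) (u (Suc i)) - ff (w (i-1)) (w i)) \<ge> (1::int)"
proof -
  have jM: "j < M" using big nz by (metis not_le)
  obtain j' where j': "j' < Suc M" "\<not> (w (j' - 1) = Zero \<and> u j' = Zero)"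
  proof (cases "u j = Zero")
    case True
    then show ?thesis using that[of "Suc j"] nz jM by auto
  next
    case False
    then show ?thesis using that[of j] jM by auto
  qed
  show ?thesis
  proof (rule telescope_credit[where p="\<lambda>i. pp (w (i-1)) (u i)" and z="\<lambda>i. w (i-1) = Zero \<and> u i = Zero"])
    fix i assume "i < Suc M"
    show "2 * of_bool (good (u i) (w (i-1)) (w i)) + ff (u i) (u (Suc i)) - ff (w (i-1)) (w i)
      \<ge> pp (w (Suc i - 1)) (u (Suc i)) - pp (w (i-1)) (u i) +
        (if \<not> (w (i-1) = Zero \<and> u i = Zero) \<and> (w (Suc i - 1) = Zero \<and> u (Suc i) = Zero) then 1 else 0)"
      unfolding diff_Suc_1 by (rule local_main)
  next
    show "pp (w (0-1)) (u 0) = 0" using w0 u0 by (simp add: pp_def)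
  next
    show "pp (w (Suc M - 1)) (u (Suc M)) = 0" using big[of M] by (simp add: pp_def)
  next
    show "w (Suc M - 1) = Zero \<and> u (Suc M) = Zero" using big[of M] big[of "Suc M"] by simp
  qed (use j' in auto)
qed

lemma strip_u0:
  fixes w u :: "nat \<Rightarrow> sym"
  assumes w0: "w 0 = Zero" and u0: "\<And>i. u i = Zero"
    and big: "\<And>i. i \<ge> M \<Longrightarrow> w i = Zero"
    and nz: "w j \<noteq> Zero"
  shows "(\<Sum>i<Suc M. 2 * of_bool (good (u i) (w (i-1)) (w i)) + ff (u i) (u (Suc i)) - ff (w (i-1)) (w i)) \<ge> (3::int)"
proof -
  have jM: "j < M" using big nz by (metis not_le)
  show ?thesis unfolding u0
  proof (rule telescope_credit[where p="\<lambda>i. 2 * of_bool (w (i-1) \<noteq> Zero)" and z="\<lambda>i. w (i-1) = Zero" and j="Suc j"])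
    fix i assume "i < Suc M"
    show "2 * of_bool (good Zero (w (i-1)) (w i)) + ff Zero Zero - ff (w (i-1)) (w i)
      \<ge> 2 * of_bool (w (Suc i - 1) \<noteq> Zero) - 2 * of_bool (w (i-1) \<noteq> Zero) +
        (if \<not> (w (i-1) = Zero) \<and> (w (Suc i - 1) = Zero) then 3 else 0)"
      unfolding diff_Suc_1 by (rule local_u0)
  qed (use w0 big[of M] jM nz in auto)
qed

lemma strip_w0:
  fixes w u :: "nat \<Rightarrow> sym"
  assumes w0: "\<And>i. w i = Zero" and u0: "u 0 = Zero"
    and big: "\<And>i. i \<ge> M \<Longrightarrow> u i = Zero"
    and nz: "u j \<noteq> Zero"
  shows "(\<Sum>i<Suc M. 2 * of_bool (good (u i) (w (i-1)) (w i)) + ff (u i) (u (Suc i)) - ff (w (i-1)) (w i)) \<ge> (3::int)"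
proof -
  have jM: "j < M" using big nz by (metis not_le)
  show ?thesis unfolding w0
  proof (rule telescope_credit[where p="\<lambda>i. 0" and z="\<lambda>i. u i = Zero" and j="j"])
    fix i assume "i < Suc M"
    show "2 * of_bool (good (u i) Zero Zero) + ff (u i) (u (Suc i)) - ff Zero Zero
      \<ge> 0 - 0 + (if \<not> (u i = Zero) \<and> (u (Suc i) = Zero) then 3 else 0)"
      by (rule local_w0)
  qed (use u0 big[of "Suc M"] jM nz in auto)
qed

definition Fs :: "nat \<Rightarrow> (nat \<Rightarrow> sym) \<Rightarrow> int" where
  "Fs M w = (\<Sum>i<Suc M. ff (w i) (w (Suc i)))"

lemma sum_of_bool_card:
  "(\<Sum>i<(n::nat). (of_bool (Q i) :: int)) = int (card {i. i < n \<and> Q i})"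
proof -
  have e: "{i. i < n \<and> Q i} = {..<n} \<inter> {i. Q i}" by auto
  show ?thesis unfolding e by (rule sum_of_bool_eq) simp_all
qed

lemma strip_sum_eq:
  fixes w u :: "nat \<Rightarrow> sym"
  assumes w0: "w 0 = Zero" and bw: "\<And>i. i \<ge> M \<Longrightarrow> w i = Zero"
  shows "(\<Sum>i<Suc M. 2 * of_bool (good (u i) (w (i-1)) (w i)) + ff (u i) (u (Suc i)) - ff (w (i-1)) (w i))
     = 2 * int (card {i. i < Suc M \<and> good (u i) (w (i-1)) (w i)}) + Fs M u - Fs M w"
proof -
  have ffz: "ff Zero x = 0" for x by (simp add: ff_def)
  have A: "(\<Sum>i<Suc M. ff (w (i-1)) (w i)) = (\<Sum>i<M. ff (w i) (w (Suc i)))"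
    by (subst sum.lessThan_Suc_shift) (simp add: w0 ffz)
  have B: "Fs M w = (\<Sum>i<M. ff (w i) (w (Suc i)))"
    unfolding Fs_def using bw[of M] by (simp add: ffz)
  have C: "(\<Sum>i<Suc M. 2 * (of_bool (good (u i) (w (i-1)) (w i)) :: int)) = 2 * int (card {i. i < Suc M \<and> good (u i) (w (i-1)) (w i)})"
  proof -
    have "(\<Sum>i<Suc M. 2 * (of_bool (good (u i) (w (i-1)) (w i)) :: int)) = 2 * (\<Sum>i<Suc M. (of_bool (good (u i) (w (i-1)) (w i)) :: int))"
      by (rule sum_distrib_left[symmetric])
    then show ?thesis using sum_of_bool_card[of "\<lambda>i. good (u i) (w (i-1)) (w i)" "Suc M"] by simp
  qed
  have D: "(\<Sum>i<Suc M. 2 * of_bool (good (u i) (w (i-1)) (w i)) + ff (u i) (u (Suc i)) - ff (w (i-1)) (w i))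
     = (\<Sum>i<Suc M. 2 * (of_bool (good (u i) (w (i-1)) (w i)) :: int)) + (\<Sum>i<Suc M. ff (u i) (u (Suc i)))
       - (\<Sum>i<Suc M. ff (w (i-1)) (w i))"
    by (simp only: sum.distrib sum_subtractf)
  have E: "(\<Sum>i<Suc M. ff (u i) (u (Suc i))) = Fs M u" by (simp only: Fs_def)
  show ?thesis
    using D C A B E by linarith
qed


lemma Fs_zero: "(\<And>i. w i = Zero) \<Longrightarrow> Fs M w = 0"
  by (simp add: Fs_def ff_def)

lemma adjacent_level:
  assumes "adjacent y z" shows "fst z + snd z \<le> fst y + snd y + 1"
proof -
  obtain a b where y: "y = (a,b)" by (cases y)
  obtain c d where z: "z = (c,d)" by (cases z)
  have "(a - c, b - d) \<in> {(1,0), (-1,0), (0,1), (0,-1), (1,-1), (-1,1)}"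
    using assms unfolding y z adjacent_def e1_def e2_def by simp
  then show ?thesis unfolding y z by auto
qed

lemma path_levels:
  assumes "(\<lambda>u v. u \<in> K \<and> v \<in> K \<and> adjacent u v)\<^sup>*\<^sup>* x y" and "x \<in> K"
  shows "\<forall>m. fst x + snd x \<le> m \<and> m \<le> fst y + snd y \<longrightarrow> (\<exists>q\<in>K. fst q + snd q = m)"
  using assms(1)
proof (induction rule: rtranclp_induct)
  case base
  then show ?case using assms(2) by force
next
  case (step y z)
  show ?case
  proof (intro allI impI)
    fix m assume m: "fst x + snd x \<le> m \<and> m \<le> fst z + snd z"
    show "\<exists>q\<in>K. fst q + snd q = m"
    proof (cases "m \<le> fst y + snd y")
      case True then show ?thesis using step.IH m by blast
    next
      case False
      then have "m = fst z + snd z" using adjacent_level[of y z] step.hyps(2) m by auto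
      then show ?thesis using step.hyps(2) by blast
    qed
  qed
qed

lemma is_node_good: "is_node D a \<longleftrightarrow> good (D a) (D (a - e1)) (D (a - e2))"
  unfolding is_node_def E_def good_def by simp



theorem mainTheorem5:
  fixes D :: "int \<times> int \<Rightarrow> sym" and d :: int
  assumes "newton_diagram2 D"
    and "size_pts (support D) = d"
    and "connected_pts (support D)"
    and "(0, 0) \<in> support D"
  shows "real (num_nodes D) \<ge> (real_of_int d + 5) / 2"
proof -
  define K where "K = support D"
  have finK: "finite K" and neK: "K \<noteq> {}" and subK: "K \<subseteq> {m. fst m \<ge> 0 \<and> snd m \<ge> 0}"
    using assms(1) unfolding newton_diagram2_def K_def by auto
  have O: "(0,0) \<in> K" using assms(4) K_def by simp
  have DK: "D q \<noteq> Zero \<Longrightarrow> q \<in> K" for q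
    unfolding K_def support_def by (cases "D q") auto
  have Dz: "q \<notin> K \<Longrightarrow> D q = Zero" for q using DK by blast
  have nonneg: "q \<in> K \<Longrightarrow> fst q \<ge> 0 \<and> snd q \<ge> 0" for q using subK by auto
  define k where "k = Max ((\<lambda>m. fst m + snd m) ` K)"
  have kmax: "q \<in> K \<Longrightarrow> fst q + snd q \<le> k" for q
    unfolding k_def using finK by auto
  have "k \<in> (\<lambda>m. fst m + snd m) ` K"
    unfolding k_def using finK neK by (intro Max_in) auto
  then obtain pk where pk: "pk \<in> K" "fst pk + snd pk = k" by auto
  have k0: "k \<ge> 0" using kmax[OF O] by simp
  have m1: "Min (fst ` K) = 0"
    by (rule Min_eqI) (use finK O nonneg in \<open>auto intro: rev_image_eqI\<close>)
  have m2: "Min (snd ` K) = 0"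
    by (rule Min_eqI) (use finK O nonneg in \<open>auto intro: rev_image_eqI\<close>)
  have dk: "d = k + 1"
    using assms(2) unfolding size_pts_def K_def[symmetric] k_def[symmetric] m1 m2 by simp
  have lev: "\<exists>q\<in>K. fst q + snd q = m" if "0 \<le> m" "m \<le> k" for m
  proof -
    have "(\<lambda>u v. u \<in> K \<and> v \<in> K \<and> adjacent u v)\<^sup>*\<^sup>* (0,0) pk"
      using assms(3) O pk(1) unfolding connected_pts_def K_def by blast
    from path_levels[OF this O] show ?thesis using that pk(2) by auto
  qed
  define M where "M = nat k + 3"
  define lw where "lw m i = D (int i - 1, m - (int i - 1))" for m :: int and i :: nat
  have lw0: "lw m 0 = Zero" for m
    unfolding lw_def using nonneg by (intro Dz) force
  have lwbig: "lw m i = Zero" if "i \<ge> M" "m \<le> k + 1" for m i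
  proof -
    have "(int i - 1, m - (int i - 1)) \<notin> K"
    proof
      assume "(int i - 1, m - (int i - 1)) \<in> K"
      from nonneg[OF this] have "int i - 1 \<le> m" by simp
      moreover have "int i \<ge> k + 3" using that(1) k0 unfolding M_def by linarith
      ultimately show False using that(2) by linarith
    qed
    then show ?thesis unfolding lw_def by (rule Dz)
  qed
  have lwneg: "lw m i = Zero" if "m < 0" for m i
  proof -
    have "(int i - 1, m - (int i - 1)) \<notin> K"
    proof
      assume "(int i - 1, m - (int i - 1)) \<in> K"
      from nonneg[OF this] show False using that by simp
    qed
    then show ?thesis unfolding lw_def by (rule Dz)
  qed
  have lwhi: "lw m i = Zero" if "m > k" for m i
  proof -
    have "(int i - 1, m - (int i - 1)) \<notin> K"
    proof
      assume "(int i - 1, m - (int i - 1)) \<in> K"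
      from kmax[OF this] show False using that by simp
    qed
    then show ?thesis unfolding lw_def by (rule Dz)
  qed
  have lwpt: "lw (fst q + snd q) (nat (fst q) + 1) \<noteq> Zero" if "q \<in> K" for q
  proof -
    have "int (nat (fst q) + 1) - 1 = fst q" using nonneg[OF that] by simp
    then have "lw (fst q + snd q) (nat (fst q) + 1) = D q" unfolding lw_def by simp
    moreover have "D q \<noteq> Zero" using that unfolding K_def support_def by auto
    ultimately show ?thesis by simp
  qed
  have node_near: "a \<in> K \<or> a - e1 \<in> K \<or> a - e2 \<in> K" if "is_node D a" for a
    using that DK unfolding is_node_good good_alt by blast
  have node_bnd: "0 \<le> fst a \<and> fst a \<le> k + 1 \<and> 0 \<le> fst a + snd a \<and> fst a + snd a \<le> k + 1"
    if "is_node D a" for a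
  proof -
    obtain x y where a: "a = (x,y)" by (cases a)
    have "(x,y) \<in> K \<or> (x - 1, y) \<in> K \<or> (x, y - 1) \<in> K"
      using node_near[OF that] unfolding a e1_def e2_def by simp
    then show ?thesis unfolding a using nonneg kmax by fastforce
  qed
  define Nm where "Nm m = card {a. is_node D a \<and> fst a + snd a = m}" for m
  define f where "f m i = (int i - 1, m - (int i - 1))" for m :: int and i :: nat
  have good_node: "good (lw m i) (lw (m-1) (i-1)) (lw (m-1) i) \<longleftrightarrow> is_node D (f m i)"
    if "i \<ge> 1" for m i
  proof -
    have i1: "int (i - 1) = int i - 1" using that by simp
    have "lw (m-1) (i-1) = D (f m i - e1)"
      unfolding lw_def f_def e1_def i1 by (simp add: algebra_simps)
    moreover have "lw (m-1) i = D (f m i - e2)"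
      unfolding lw_def f_def e2_def by (simp add: algebra_simps)
    moreover have "lw m i = D (f m i)" unfolding lw_def f_def by simp
    ultimately show ?thesis unfolding is_node_good by simp
  qed
  have Nm_eq: "Nm m = card {i. i < Suc M \<and> good (lw m i) (lw (m-1) (i-1)) (lw (m-1) i)}" for m
  proof -
    let ?I = "{i. i < Suc M \<and> good (lw m i) (lw (m-1) (i-1)) (lw (m-1) i)}"
    have I1: "i \<ge> 1" if "i \<in> ?I" for i
      using that lw0 by (cases i) (auto simp: good_alt)
    have "{a. is_node D a \<and> fst a + snd a = m} = f m ` ?I"
    proof (intro set_eqI iffI)
      fix a assume a: "a \<in> {a. is_node D a \<and> fst a + snd a = m}"
      define i where "i = nat (fst a) + 1"
      have b: "0 \<le> fst a" "fst a \<le> k + 1" using node_bnd a by auto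
      have fa: "f m i = a" unfolding f_def i_def using b a by (cases a) auto
      have "i < Suc M" unfolding i_def M_def using b by linarith
      moreover have "good (lw m i) (lw (m-1) (i-1)) (lw (m-1) i)"
        using good_node[of i m] fa a unfolding i_def by auto
      ultimately show "a \<in> f m ` ?I" using fa by blast
    next
      fix a assume "a \<in> f m ` ?I"
      then obtain i where i: "i \<in> ?I" "a = f m i" by blast
      then show "a \<in> {a. is_node D a \<and> fst a + snd a = m}"
        using good_node[of i m] I1[OF i(1)] unfolding f_def by auto
    qed
    moreover have "inj_on (f m) ?I" unfolding f_def by (rule inj_onI) auto
    ultimately show ?thesis unfolding Nm_def by (simp add: card_image)
  qed
  define n where "n = nat k + 2"
  have fin_nodes: "finite {a. is_node D a}"
  proof (rule finite_subset)
    show "{a. is_node D a} \<subseteq> K \<union> (\<lambda>q. q + e1) ` K \<union> (\<lambda>q. q + e2) ` K"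
    proof
      fix a assume "a \<in> {a. is_node D a}"
      then have "a \<in> K \<or> a - e1 \<in> K \<or> a - e2 \<in> K" using node_near by auto
      moreover have "a = (a - e1) + e1" "a = (a - e2) + e2" by simp_all
      ultimately show "a \<in> K \<union> (\<lambda>q. q + e1) ` K \<union> (\<lambda>q. q + e2) ` K" by blast
    qed
  qed (use finK in auto)
  have nodes_sum: "num_nodes D = (\<Sum>j<n. Nm (int j))"
  proof -
    have "{a. is_node D a} = (\<Union>j\<in>{..<n}. {a. is_node D a \<and> fst a + snd a = int j})"
    proof (intro set_eqI iffI)
      fix a assume a: "a \<in> {a. is_node D a}"
      then have b: "0 \<le> fst a + snd a" "fst a + snd a \<le> k + 1" using node_bnd by auto
      then have "nat (fst a + snd a) < n" unfolding n_def by linarith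
      moreover have "fst a + snd a = int (nat (fst a + snd a))" using b by simp
      ultimately show "a \<in> (\<Union>j\<in>{..<n}. {a. is_node D a \<and> fst a + snd a = int j})" using a by blast
    qed auto
    then have "num_nodes D = card (\<Union>j\<in>{..<n}. {a. is_node D a \<and> fst a + snd a = int j})"
      unfolding num_nodes_def by simp
    also have "\<dots> = (\<Sum>j<n. card {a. is_node D a \<and> fst a + snd a = int j})"
      by (rule card_UN_disjoint) (use fin_nodes in auto)
    finally show ?thesis unfolding Nm_def .
  qed
  define St where "St j = (\<Sum>i<Suc M. 2 * of_bool (good (lw (int j) i) (lw (int j - 1) (i-1)) (lw (int j - 1) i))
      + ff (lw (int j) i) (lw (int j) (Suc i)) - ff (lw (int j - 1) (i-1)) (lw (int j - 1) i))" for j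
  define G where "G j = Fs M (lw (int j - 1))" for j
  have St_eq: "St j = 2 * int (Nm (int j)) + G (Suc j) - G j" if "j < n" for j
  proof -
    have "St j = 2 * int (card {i. i < Suc M \<and> good (lw (int j) i) (lw (int j - 1) (i-1)) (lw (int j - 1) i)})
       + Fs M (lw (int j)) - Fs M (lw (int j - 1))"
      unfolding St_def
    proof (rule strip_sum_eq)
      show "lw (int j - 1) 0 = Zero" by (rule lw0)
      fix i assume "M \<le> i" then show "lw (int j - 1) i = Zero"
        using that k0 unfolding n_def by (intro lwbig) auto
    qed
    then show ?thesis unfolding Nm_eq G_def by simp
  qed
  have St0: "St 0 \<ge> 3" unfolding St_def
  proof (rule strip_w0[where j=1])
    show "lw (int 0 - 1) i = Zero" for i by (rule lwneg) simp
    show "lw (int 0) 0 = Zero" by (rule lw0)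
    show "lw (int 0) i = Zero" if "M \<le> i" for i using that k0 by (intro lwbig) auto
    show "lw (int 0) 1 \<noteq> Zero" using lwpt[OF O] by simp
  qed
  have Stn: "St (nat k + 1) \<ge> 3" unfolding St_def
  proof (rule strip_u0[where j="nat (fst pk) + 1"])
    show "lw (int (nat k + 1)) i = Zero" for i using k0 by (intro lwhi) simp
    show "lw (int (nat k + 1) - 1) 0 = Zero" by (rule lw0)
    show "lw (int (nat k + 1) - 1) i = Zero" if "M \<le> i" for i using that k0 by (intro lwbig) auto
    show "lw (int (nat k + 1) - 1) (nat (fst pk) + 1) \<noteq> Zero" using lwpt[OF pk(1)] pk(2) k0 by simp
  qed
  have Stmid: "St j \<ge> 1" if j1: "1 \<le> j" and jk: "j \<le> nat k" for j
  proof -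
    obtain q where q: "q \<in> K" "fst q + snd q = int j"
    proof -
      have "int j \<le> k" using jk k0 by linarith
      then show ?thesis using lev[of "int j"] that by auto
    qed
    show ?thesis unfolding St_def
    proof (rule strip_main[where j="nat (fst q) + 1"])
      show "lw (int j - 1) 0 = Zero" by (rule lw0)
      show "lw (int j) 0 = Zero" by (rule lw0)
      show "lw (int j - 1) i = Zero \<and> lw (int j) i = Zero" if "M \<le> i" for i
        using that \<open>j \<le> nat k\<close> k0 by (auto intro!: lwbig)
      show "lw (int j - 1) (nat (fst q) + 1) \<noteq> Zero \<or> lw (int j) (nat (fst q) + 1) \<noteq> Zero"
        using lwpt[OF q(1)] q(2) by simp
    qed
  qed
  have G0: "G 0 = 0" unfolding G_def by (rule Fs_zero) (rule lwneg, simp)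
  have Gn: "G n = 0" unfolding G_def by (rule Fs_zero) (rule lwhi, use k0 in \<open>simp add: n_def\<close>)
  have "(\<Sum>j<n. St j) = (\<Sum>j<n. 2 * int (Nm (int j)) + (G (Suc j) - G j))"
    by (rule sum.cong) (simp_all add: St_eq)
  also have "\<dots> = 2 * (\<Sum>j<n. int (Nm (int j))) + (G n - G 0)"
    by (simp add: sum.distrib sum_distrib_left sum_lessThan_telescope)
  finally have sumSt: "(\<Sum>j<n. St j) = 2 * int (num_nodes D)"
    unfolding nodes_sum using G0 Gn by simp
  have mid: "(\<Sum>j<nat k. St (Suc j)) \<ge> (\<Sum>j<nat k. 1)"
    by (rule sum_mono) (rule Stmid, auto)
  have s1: "(\<Sum>j<Suc (Suc (nat k)). St j) = St 0 + (\<Sum>j<Suc (nat k). St (Suc j))"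
    by (rule sum.lessThan_Suc_shift)
  have s2: "(\<Sum>j<Suc (nat k). St (Suc j)) = (\<Sum>j<nat k. St (Suc j)) + St (Suc (nat k))"
    by (rule sum.lessThan_Suc)
  have n2: "n = Suc (Suc (nat k))" unfolding n_def by simp
  have "(\<Sum>j<n. St j) = St 0 + (\<Sum>j<nat k. St (Suc j)) + St (Suc (nat k))"
    unfolding n2 s1 s2 by simp
  then have "(\<Sum>j<n. St j) \<ge> int (nat k) + 6" using mid St0 Stn by simp
  then have "2 * int (num_nodes D) \<ge> k + 6" using sumSt k0 by simp
  then have "real_of_int (k + 6) \<le> real_of_int (2 * int (num_nodes D))"
    by (simp only: of_int_le_iff)
  then have "2 * real (num_nodes D) \<ge> real_of_int k + 6" by simp
  then show ?thesis using dk by simp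
qed
end
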